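(* Let $\epsilon,\delta,\tau>0$ and set $r_{max}=\frac{\epsilon\delta}{m\tau}$. For any source supernode $\mathcal V_i\in\mathcal S$, the procedure GFP$(G,\mathcal S,\mathcal V_i,r_{max})$ terminates, and its output $\hat\pi_d(\mathcal V_i,\mathcal V_j)$ is an $(\epsilon,\delta)$-approximation of $\pi_d(\mathcal V_i,\mathcal V_j)$ for every $\mathcal V_j\in\mathcal S$ with $\tau_j\le\tau$.
   Context: $G=(V,E)$ is a directed graph with $n$ nodes and $m$ edges, no self-loops, and every node of out-degree $d(v)\ge1$; $\alpha\in(0,1)$. PPR $\pi(u,v)$: probability that a random walk from $u$ which at each step stops with probability $\alpha$ and otherwise moves to a uniformly random out-neighbor stops at $v$; $\pi_d(u,v)=d(u)\pi(u,v)$. A collection $\mathcal S=\{\mathcal V_1,\dots,\mathcal V_k\}$ of supernodes is given, each $\mathcal V_i$ having a nonempty leaf set $F(\mathcal V_i)\subseteq V$, the leaf sets being pairwise disjoint. For supernodes, $\pi_d(\mathcal V_i,\mathcal V_j)=\frac{1}{|F(\mathcal V_i)||F(\mathcal V_j)|}\sum_{v_s\in F(\mathcal V_i),v_t\in F(\mathcal V_j)}\pi_d(v_s,v_t)$. The degree-normalized PageRank of $\mathcal V_j$ is $\tau_j=\frac{1}{m|F(\mathcal V_j)|}\sum_{v_t\in F(\mathcal V_j)}\sum_{v_k\in V}\pi_d(v_k,v_t)$. A value $\hat x$ is an $(\epsilon,\delta)$-approximation of $x\ge0$ if $|\hat x-x|\le\epsilon\delta$ when $x<\delta$, and $|\hat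 x-x|\le\epsilon x$ when $x\ge\delta$. Procedure GFP$(G,\mathcal S,\mathcal V_i,r_{max})$: set $\hat\pi_d(\mathcal V_i,\mathcal V_j)=0$ for all $\mathcal V_j\in\mathcal S$; set $r(\mathcal V_i,v)=d(v)/|F(\mathcal V_i)|$ for $v\in F(\mathcal V_i)$ and $0$ otherwise. While some $v_k\in V$ has $r(\mathcal V_i,v_k)>d(v_k)\,r_{max}$, pick any such $v_k$ and: if $v_k\in F(\mathcal V_j)$ for some $\mathcal V_j\in\mathcal S$, add $\alpha\,r(\mathcal V_i,v_k)/|F(\mathcal V_j)|$ to $\hat\pi_d(\mathcal V_i,\mathcal V_j)$; for each out-neighbor $v_j$ of $v_k$ add $(1-\alpha)\,r(\mathcal V_i,v_k)/d(v_k)$ to $r(\mathcal V_i,v_j)$; then set $r(\mathcal V_i,v_k)=0$. Output the values $\hat\pi_d(\mathcal V_i,\cdot)$. *)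

theory Defs
  imports Complex_Main
begin

definition outN :: "('v \<times> 'v) set \<Rightarrow> 'v \<Rightarrow> 'v set" where
  "outN E u = {w. (u, w) \<in> E}"

definition deg :: "('v \<times> 'v) set \<Rightarrow> 'v \<Rightarrow> nat" where
  "deg E u = card (outN E u)"

definition graph_ok :: "'v set \<Rightarrow> ('v \<times> 'v) set \<Rightarrow> bool" where
  "graph_ok V E \<longleftrightarrow> finite V \<and> E \<subseteq> V \<times> V \<and> (\<forall>v. (v, v) \<notin> E)
     \<and> (\<forall>v\<in>V. deg E v \<ge> 1)"

fun walkprob :: "('v \<times> 'v) set \<Rightarrow> nat \<Rightarrow> 'v \<Rightarrow> 'v \<Rightarrow> real" where
  "walkprob E 0 u v = (if u = v then 1 else 0)"
| "walkprob E (Suc l) u v = (\<Sum>w\<in>outN E u. walkprob E l w v / real (deg E u))"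

text \<open>PPR: the walk stops after exactly l steps with probability alpha (1-alpha)^l.\<close>
definition ppr :: "('v \<times> 'v) set \<Rightarrow> real \<Rightarrow> 'v \<Rightarrow> 'v \<Rightarrow> real" where
  "ppr E \<alpha> u v = (\<Sum>l. \<alpha> * (1 - \<alpha>) ^ l * walkprob E l u v)"

definition ppr_d :: "('v \<times> 'v) set \<Rightarrow> real \<Rightarrow> 'v \<Rightarrow> 'v \<Rightarrow> real" where
  "ppr_d E \<alpha> u v = real (deg E u) * ppr E \<alpha> u v"

text \<open>Supernodes: index set S, leaf sets F.\<close>
definition supernodes_ok :: "'v set \<Rightarrow> 's set \<Rightarrow> ('s \<Rightarrow> 'v set) \<Rightarrow> bool" where
  "supernodes_ok V S F \<longleftrightarrow> finite S \<and> (\<forall>i\<in>S. F i \<noteq> {} \<and> F i \<subseteq> V)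
     \<and> (\<forall>i\<in>S. \<forall>j\<in>S. i \<noteq> j \<longrightarrow> F i \<inter> F j = {})"

definition ppr_d_super :: "('v \<times> 'v) set \<Rightarrow> real \<Rightarrow> ('s \<Rightarrow> 'v set) \<Rightarrow> 's \<Rightarrow> 's \<Rightarrow> real" where
  "ppr_d_super E \<alpha> F i j =
     (\<Sum>vs\<in>F i. \<Sum>vt\<in>F j. ppr_d E \<alpha> vs vt) / (real (card (F i)) * real (card (F j)))"

definition dpagerank :: "'v set \<Rightarrow> ('v \<times> 'v) set \<Rightarrow> real \<Rightarrow> ('s \<Rightarrow> 'v set) \<Rightarrow> 's \<Rightarrow> real" where
  "dpagerank V E \<alpha> F j =
     (\<Sum>vt\<in>F j. \<Sum>vk\<in>V. ppr_d E \<alpha> vk vt) / (real (card E) * real (card (F j)))"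

definition eps_delta_approx :: "real \<Rightarrow> real \<Rightarrow> real \<Rightarrow> real \<Rightarrow> bool" where
  "eps_delta_approx \<epsilon> \<delta> xh x \<longleftrightarrow>
     (x < \<delta> \<longrightarrow> \<bar>xh - x\<bar> \<le> \<epsilon> * \<delta>) \<and> (x \<ge> \<delta> \<longrightarrow> \<bar>xh - x\<bar> \<le> \<epsilon> * x)"

text \<open>GFP as a nondeterministic transition system on states (pihat, residue).\<close>
definition gfp_init :: "('v \<times> 'v) set \<Rightarrow> ('s \<Rightarrow> 'v set) \<Rightarrow> 's \<Rightarrow> ('s \<Rightarrow> real) \<times> ('v \<Rightarrow> real)" where
  "gfp_init E F i = ((\<lambda>_. 0), (\<lambda>v. if v \<in> F i then real (deg E v) / real (card (F i)) else 0))"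

definition gfp_step :: "'v set \<Rightarrow> ('v \<times> 'v) set \<Rightarrow> real \<Rightarrow> 's set \<Rightarrow> ('s \<Rightarrow> 'v set) \<Rightarrow> real
    \<Rightarrow> ('s \<Rightarrow> real) \<times> ('v \<Rightarrow> real) \<Rightarrow> ('s \<Rightarrow> real) \<times> ('v \<Rightarrow> real) \<Rightarrow> bool" where
  "gfp_step V E \<alpha> S F rmax st st' \<longleftrightarrow>
     (\<exists>vk\<in>V. snd st vk > real (deg E vk) * rmax \<and>
        st' = ((\<lambda>j. if j \<in> S \<and> vk \<in> F j
                     then fst st j + \<alpha> * snd st vk / real (card (F j)) else fst st j),
               (\<lambda>w. snd st w + (if w \<in> outN E vk
                                 then (1 - \<alpha>) * snd st vk / real (deg E vk) else 0))(vk := 0)))"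

end

theory Submission imports Defs begin

lemma out_sub: "graph_ok V E \<Longrightarrow> outN E u \<subseteq> V"
  unfolding graph_ok_def outN_def by auto

lemma fin_out: "graph_ok V E \<Longrightarrow> finite (outN E u)"
  using out_sub finite_subset graph_ok_def by metis

lemma wp_bounds: "graph_ok V E \<Longrightarrow> 0 \<le> walkprob E l u v \<and> walkprob E l u v \<le> 1"
proof (induction l arbitrary: u)
  case 0 show ?case by simp
next
  case (Suc l)
  have fin: "finite (outN E u)" using fin_out[OF Suc.prems] .
  have "(\<Sum>w\<in>outN E u. walkprob E l w v / real (deg E u)) \<le> (\<Sum>w\<in>outN E u. 1 / real (deg E u))"
    by (rule sum_mono, rule divide_right_mono) (use Suc.IH[OF Suc.prems] in auto)
  also have "\<dots> = real (card (outN E u)) / real (deg E u)" by simp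
  also have "\<dots> \<le> 1" by (simp add: deg_def)
  finally have "walkprob E (Suc l) u v \<le> 1" by simp
  moreover have "0 \<le> walkprob E (Suc l) u v"
    using Suc.IH[OF Suc.prems] by (auto intro!: sum_nonneg divide_nonneg_nonneg)
  ultimately show ?case by simp
qed

lemma summ: assumes "graph_ok V E" "0 < \<alpha>" "\<alpha> < 1"
  shows "summable (\<lambda>l. \<alpha> * (1-\<alpha>)^l * walkprob E l u v)"
proof (rule summable_comparison_test'[where g="\<lambda>l. \<alpha> * (1-\<alpha>)^l" and N=0])
  show "summable (\<lambda>l. \<alpha> * (1-\<alpha>)^l)"
    using assms by (intro summable_mult summable_geometric) auto
  fix n
  have b: "0 \<le> walkprob E n u v" "walkprob E n u v \<le> 1" using wp_bounds[OF assms(1)] by auto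
  have p: "0 \<le> \<alpha> * (1-\<alpha>)^n" using assms by simp
  show "norm (\<alpha> * (1-\<alpha>)^n * walkprob E n u v) \<le> \<alpha> * (1-\<alpha>)^n"
  proof -
    have "norm (\<alpha> * (1-\<alpha>)^n * walkprob E n u v) = \<alpha> * (1-\<alpha>)^n * walkprob E n u v"
      using b p by simp
    then show ?thesis using mult_left_mono[OF b(2) p] by simp
  qed
qed

lemma ppr_nonneg: assumes "graph_ok V E" "0 < \<alpha>" "\<alpha> < 1"
  shows "0 \<le> ppr E \<alpha> u v"
  unfolding ppr_def using summ[OF assms] wp_bounds[OF assms(1)] assms
  by (intro suminf_nonneg) auto

lemma ppr_rec: assumes "graph_ok V E" "0 < \<alpha>" "\<alpha> < 1"
  shows "ppr E \<alpha> u v = \<alpha> * (if u = v then 1 else 0)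
      + (1-\<alpha>) / real (deg E u) * (\<Sum>w\<in>outN E u. ppr E \<alpha> w v)"
proof -
  define f where "f = (\<lambda>l. \<alpha> * (1-\<alpha>)^l * walkprob E l u v)"
  have s: "summable f" unfolding f_def by (rule summ[OF assms])
  have 1: "ppr E \<alpha> u v = f 0 + (\<Sum>n. f (Suc n))"
    using suminf_split_head[OF s] by (simp add: ppr_def f_def)
  have 2: "(\<lambda>n. f (Suc n)) = (\<lambda>n. (1-\<alpha>) / real (deg E u) *
              (\<Sum>w\<in>outN E u. \<alpha> * (1-\<alpha>)^n * walkprob E n w v))"
    by (rule ext) (simp add: f_def sum_distrib_left sum_divide_distrib mult_ac)
  have 3: "(\<Sum>n. (\<Sum>w\<in>outN E u. \<alpha> * (1-\<alpha>)^n * walkprob E n w v))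
       = (\<Sum>w\<in>outN E u. ppr E \<alpha> w v)"
    unfolding ppr_def by (rule suminf_sum) (rule summ[OF assms])
  have 4: "(\<Sum>n. f (Suc n)) = (1-\<alpha>) / real (deg E u) * (\<Sum>w\<in>outN E u. ppr E \<alpha> w v)"
    unfolding 2 by (subst suminf_mult) (auto intro!: summable_sum summ[OF assms] simp: 3)
  show ?thesis using 1 4 by (simp add: f_def)
qed

definition Qf :: "('v \<times> 'v) set \<Rightarrow> real \<Rightarrow> ('s \<Rightarrow> 'v set) \<Rightarrow> 's \<Rightarrow> 'v \<Rightarrow> real" where
  "Qf E \<alpha> F j v = (\<Sum>t\<in>F j. ppr E \<alpha> v t) / real (card (F j))"

lemma Qf_nonneg: assumes "graph_ok V E" "0 < \<alpha>" "\<alpha> < 1"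
  shows "0 \<le> Qf E \<alpha> F j v"
  unfolding Qf_def using ppr_nonneg[OF assms] by (auto intro!: sum_nonneg divide_nonneg_nonneg)

lemma Qf_rec: assumes "graph_ok V E" "0 < \<alpha>" "\<alpha> < 1" "finite (F j)"
  shows "Qf E \<alpha> F j u = \<alpha> * (if u \<in> F j then 1 else 0) / real (card (F j))
     + (1-\<alpha>) / real (deg E u) * (\<Sum>w\<in>outN E u. Qf E \<alpha> F j w)"
proof -
  have "(\<Sum>t\<in>F j. ppr E \<alpha> u t) = (\<Sum>t\<in>F j. \<alpha> * (if u = t then 1 else 0)
      + (1-\<alpha>) / real (deg E u) * (\<Sum>w\<in>outN E u. ppr E \<alpha> w t))"
    by (rule sum.cong[OF refl], rule ppr_rec[OF assms(1-3)])
  also have "\<dots> = \<alpha> * (if u \<in> F j then 1 else 0)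
      + (1-\<alpha>) / real (deg E u) * (\<Sum>w\<in>outN E u. \<Sum>t\<in>F j. ppr E \<alpha> w t)"
    using assms(4) by (simp add: sum.distrib sum_divide_distrib[symmetric] sum_distrib_left[symmetric] sum.swap[of _ "F j"])
  finally show ?thesis unfolding Qf_def
    by (simp add: sum_divide_distrib[symmetric] add_divide_distrib)
qed

lemma sum_upd:
  fixes r g :: "'v \<Rightarrow> real"
  assumes "finite V" "vk \<in> V" "Ou \<subseteq> V" "vk \<notin> Ou"
  shows "(\<Sum>w\<in>V. ((\<lambda>w. r w + (if w \<in> Ou then c else 0))(vk := 0)) w * g w)
       = (\<Sum>w\<in>V. r w * g w) - r vk * g vk + c * (\<Sum>w\<in>Ou. g w)"
proof -
  have e: "\<And>w. ((\<lambda>w. r w + (if w \<in> Ou then c else 0))(vk := 0)) w * g w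
     = r w * g w - (if w = vk then r vk * g vk else 0) + (if w \<in> Ou then c * g w else 0)"
    using assms(4) by (auto simp: algebra_simps)
  have a: "(\<Sum>w\<in>V. (if w = vk then r vk * g vk else 0)) = r vk * g vk"
    using assms(1,2) by simp
  have b: "(\<Sum>w\<in>V. (if w \<in> Ou then c * g w else 0)) = c * (\<Sum>w\<in>Ou. g w)"
  proof -
    have "(\<Sum>w\<in>V. (if w \<in> Ou then c * g w else 0)) = (\<Sum>w\<in>V \<inter> Ou. c * g w)"
      using sum.inter_restrict[OF assms(1)] by metis
    also have "V \<inter> Ou = Ou" using assms(3) by blast
    finally show ?thesis by (simp add: sum_distrib_left)
  qed
  show ?thesis unfolding e using a b by (simp add: sum.distrib sum_subtractf)
qed

definition Inv :: "'v set \<Rightarrow> ('v \<times> 'v) set \<Rightarrow> real \<Rightarrow> 's set \<Rightarrow> ('s \<Rightarrow> 'v set) \<Rightarrow> 's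
   \<Rightarrow> ('s \<Rightarrow> real) \<times> ('v \<Rightarrow> real) \<Rightarrow> bool" where
  "Inv V E \<alpha> S F i st \<longleftrightarrow> (\<forall>v. 0 \<le> snd st v) \<and>
     (\<forall>j\<in>S. ppr_d_super E \<alpha> F i j = fst st j + (\<Sum>v\<in>V. snd st v * Qf E \<alpha> F j v))"

lemma step_inv:
  assumes G: "graph_ok V E" and SN: "supernodes_ok V S F" and a: "0 < \<alpha>" "\<alpha> < 1"
    and st: "gfp_step V E \<alpha> S F rmax st st'" and I: "Inv V E \<alpha> S F i st"
  shows "Inv V E \<alpha> S F i st' \<and> (\<exists>vk\<in>V. snd st vk > real (deg E vk) * rmax \<and>
     (\<Sum>v\<in>V. snd st' v) = (\<Sum>v\<in>V. snd st v) - \<alpha> * snd st vk)"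
proof -
  obtain vk where vk: "vk \<in> V" and hr: "snd st vk > real (deg E vk) * rmax" and
    st': "st' = ((\<lambda>j. if j \<in> S \<and> vk \<in> F j
                     then fst st j + \<alpha> * snd st vk / real (card (F j)) else fst st j),
               (\<lambda>w. snd st w + (if w \<in> outN E vk
                                 then (1 - \<alpha>) * snd st vk / real (deg E vk) else 0))(vk := 0))"
    using st unfolding gfp_step_def by blast
  define r where "r = snd st"
  define Ou where "Ou = outN E vk"
  define c where "c = (1 - \<alpha>) * r vk / real (deg E vk)"
  have R: "snd st' = (\<lambda>w. r w + (if w \<in> Ou then c else 0))(vk := 0)"
    using st' unfolding c_def r_def Ou_def by simp
  have P: "\<And>j. j \<in> S \<Longrightarrow> fst st' j = fst st j + (if vk \<in> F j then \<alpha> * r vk / real (card (F j)) else 0)"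
    using st' by (simp add: r_def)
  have finV: "finite V" using G unfolding graph_ok_def by blast
  have OuV: "Ou \<subseteq> V" unfolding Ou_def by (rule out_sub[OF G])
  have vkO: "vk \<notin> Ou" using G unfolding Ou_def outN_def graph_ok_def by blast
  have dpos: "deg E vk \<ge> 1" using G vk unfolding graph_ok_def by blast
  have cardO: "card Ou = deg E vk" unfolding Ou_def deg_def by simp
  have rnn: "\<And>v. 0 \<le> r v" using I unfolding Inv_def r_def by blast
  have cnn: "0 \<le> c" unfolding c_def using a rnn[of vk] by simp
  have nn: "\<forall>v. 0 \<le> snd st' v" unfolding R using rnn cnn by auto
  have su: "(\<Sum>v\<in>V. snd st' v) = (\<Sum>v\<in>V. r v) - r vk + c * real (card Ou)"
    using sum_upd[OF finV vk OuV vkO, of r c "\<lambda>_. 1"] unfolding R by simp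
  have "c * real (card Ou) = (1 - \<alpha>) * r vk" unfolding c_def cardO using dpos by simp
  with su have su2: "(\<Sum>v\<in>V. snd st' v) = (\<Sum>v\<in>V. snd st v) - \<alpha> * snd st vk"
    by (simp add: r_def algebra_simps)
  have eq: "\<forall>j\<in>S. ppr_d_super E \<alpha> F i j = fst st' j + (\<Sum>v\<in>V. snd st' v * Qf E \<alpha> F j v)"
  proof
    fix j assume j: "j \<in> S"
    have finF: "finite (F j)" using SN j finV unfolding supernodes_ok_def by (meson finite_subset)
    have old: "ppr_d_super E \<alpha> F i j = fst st j + (\<Sum>v\<in>V. r v * Qf E \<alpha> F j v)"
      using I j unfolding Inv_def r_def by blast
    have q: "Qf E \<alpha> F j vk = \<alpha> * (if vk \<in> F j then 1 else 0) / real (card (F j))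
       + (1-\<alpha>) / real (deg E vk) * (\<Sum>w\<in>Ou. Qf E \<alpha> F j w)"
      unfolding Ou_def by (rule Qf_rec[where F=F and j=j, OF G a finF])
    have s: "(\<Sum>v\<in>V. snd st' v * Qf E \<alpha> F j v) = (\<Sum>v\<in>V. r v * Qf E \<alpha> F j v)
       - r vk * Qf E \<alpha> F j vk + c * (\<Sum>w\<in>Ou. Qf E \<alpha> F j w)"
      unfolding R by (rule sum_upd[OF finV vk OuV vkO])
    show "ppr_d_super E \<alpha> F i j = fst st' j + (\<Sum>v\<in>V. snd st' v * Qf E \<alpha> F j v)"
      unfolding s P[OF j] old q c_def by (simp add: algebra_simps)
  qed
  show ?thesis using nn eq su2 vk hr unfolding Inv_def by blast
qed

lemma init_inv:
  assumes G: "graph_ok V E" and SN: "supernodes_ok V S F" and a: "0 < \<alpha>" "\<alpha> < 1" and i: "i \<in> S"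
  shows "Inv V E \<alpha> S F i (gfp_init E F i)"
proof -
  have finV: "finite V" using G unfolding graph_ok_def by blast
  have FiV: "F i \<subseteq> V" using SN i unfolding supernodes_ok_def by blast
  have eq: "ppr_d_super E \<alpha> F i j = (\<Sum>v\<in>V. snd (gfp_init E F i) v * Qf E \<alpha> F j v)" for j
  proof -
    have "(\<Sum>v\<in>V. snd (gfp_init E F i) v * Qf E \<alpha> F j v)
        = (\<Sum>v\<in>V. if v \<in> F i then real (deg E v) / real (card (F i)) * Qf E \<alpha> F j v else 0)"
      by (rule sum.cong) (simp_all add: gfp_init_def)
    also have "\<dots> = (\<Sum>v\<in>V \<inter> F i. real (deg E v) / real (card (F i)) * Qf E \<alpha> F j v)"
      by (rule sum.inter_restrict[OF finV, symmetric])
    also have "V \<inter> F i = F i" using FiV by blast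
    finally have r: "(\<Sum>v\<in>V. snd (gfp_init E F i) v * Qf E \<alpha> F j v)
        = (\<Sum>v\<in>F i. real (deg E v) / real (card (F i)) * Qf E \<alpha> F j v)" .
    have "ppr_d_super E \<alpha> F i j
       = (\<Sum>vs\<in>F i. real (deg E vs) * (\<Sum>vt\<in>F j. ppr E \<alpha> vs vt)) / (real (card (F i)) * real (card (F j)))"
      unfolding ppr_d_super_def ppr_d_def by (simp only: sum_distrib_left)
    also have "\<dots> = (\<Sum>vs\<in>F i. real (deg E vs) * (\<Sum>vt\<in>F j. ppr E \<alpha> vs vt) / (real (card (F i)) * real (card (F j))))"
      by (rule sum_divide_distrib)
    also have "\<dots> = (\<Sum>v\<in>F i. real (deg E v) / real (card (F i)) * Qf E \<alpha> F j v)"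
      unfolding Qf_def by (rule sum.cong) simp_all
    finally show ?thesis using r by simp
  qed
  show ?thesis unfolding Inv_def using eq by (auto simp: gfp_init_def)
qed

theorem lemma2:
  fixes V :: "'v set" and E :: "('v \<times> 'v) set" and S :: "'s set" and F :: "'s \<Rightarrow> 'v set"
    and \<alpha> \<epsilon> \<delta> \<tau> rmax :: real and i :: 's
  assumes "graph_ok V E"
    and "supernodes_ok V S F"
    and "0 < \<alpha>" and "\<alpha> < 1"
    and "0 < \<epsilon>" and "0 < \<delta>" and "0 < \<tau>"
    and "rmax = \<epsilon> * \<delta> / (real (card E) * \<tau>)"
    and "i \<in> S"
  shows "\<not> (\<exists>f. f 0 = gfp_init E F i \<and> (\<forall>n. gfp_step V E \<alpha> S F rmax (f n) (f (Suc n))))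
    \<and> (\<forall>st. (gfp_step V E \<alpha> S F rmax)\<^sup>*\<^sup>* (gfp_init E F i) st
            \<and> \<not> (\<exists>st'. gfp_step V E \<alpha> S F rmax st st') \<longrightarrow>
          (\<forall>j\<in>S. dpagerank V E \<alpha> F j \<le> \<tau> \<longrightarrow>
             eps_delta_approx \<epsilon> \<delta> (fst st j) (ppr_d_super E \<alpha> F i j)))"
proof -
  note G = assms(1) and SN = assms(2) and a = assms(3,4)
  have finV: "finite V" using G unfolding graph_ok_def by blast
  have finE: "finite E" using G finV unfolding graph_ok_def by (meson finite_SigmaI finite_subset)
  obtain v0 where v0: "v0 \<in> F i" using SN assms(9) unfolding supernodes_ok_def by blast
  have v0V: "v0 \<in> V" using SN assms(9) v0 unfolding supernodes_ok_def by blast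
  have "deg E v0 \<ge> 1" using G v0V unfolding graph_ok_def by blast
  then have "outN E v0 \<noteq> {}" unfolding deg_def by auto
  then have "E \<noteq> {}" unfolding outN_def by auto
  then have mpos: "real (card E) > 0" using finE by (simp add: card_gt_0_iff)
  have rpos: "rmax > 0" using assms(5-8) mpos by simp
  have reach: "Inv V E \<alpha> S F i st" if "(gfp_step V E \<alpha> S F rmax)\<^sup>*\<^sup>* (gfp_init E F i) st" for st
    using that
  proof (induction rule: rtranclp_induct)
    case base show ?case by (rule init_inv[OF G SN a assms(9)])
  next
    case (step y z) then show ?case using step_inv[OF G SN a] by blast
  qed
  define R where "R st = (\<Sum>v\<in>V. snd st v)" for st :: "('s \<Rightarrow> real) \<times> ('v \<Rightarrow> real)"
  have part1: "\<not> (\<exists>f. f 0 = gfp_init E F i \<and> (\<forall>n. gfp_step V E \<alpha> S F rmax (f n) (f (Suc n))))"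
  proof
    assume "\<exists>f. f 0 = gfp_init E F i \<and> (\<forall>n. gfp_step V E \<alpha> S F rmax (f n) (f (Suc n)))"
    then obtain f where f0: "f 0 = gfp_init E F i" and fs: "\<And>n. gfp_step V E \<alpha> S F rmax (f n) (f (Suc n))"
      by blast
    have rf: "(gfp_step V E \<alpha> S F rmax)\<^sup>*\<^sup>* (gfp_init E F i) (f n)" for n
    proof (induction n)
      case 0 show ?case using f0 by simp
    next
      case (Suc n) then show ?case using fs[of n] by (meson rtranclp.rtrancl_into_rtrancl)
    qed
    have dec: "R (f n) \<le> R (f 0) - real n * (\<alpha> * rmax)" for n
    proof (induction n)
      case 0 show ?case by simp
    next
      case (Suc n)
      from step_inv[OF G SN a fs[of n] reach[OF rf[of n]]] obtain vk where
        vk: "vk \<in> V" "snd (f n) vk > real (deg E vk) * rmax"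
        "R (f (Suc n)) = R (f n) - \<alpha> * snd (f n) vk" unfolding R_def by blast
      have "deg E vk \<ge> 1" using G vk(1) unfolding graph_ok_def by blast
      then have "real (deg E vk) * rmax \<ge> rmax" using rpos by simp
      then have "\<alpha> * snd (f n) vk \<ge> \<alpha> * rmax" using vk(2) a by simp
      then show ?case using vk(3) Suc.IH by (simp add: algebra_simps)
    qed
    obtain n :: nat where n: "real n > R (f 0) / (\<alpha> * rmax)" using reals_Archimedean2 by blast
    have "\<alpha> * rmax > 0" using a rpos by simp
    then have "real n * (\<alpha> * rmax) > R (f 0)" using n by (simp add: field_simps)
    with dec[of n] have "R (f n) < 0" by simp
    moreover have "R (f n) \<ge> 0" unfolding R_def using reach[OF rf[of n]] unfolding Inv_def
      by (auto intro: sum_nonneg)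
    ultimately show False by simp
  qed
  have part2: "eps_delta_approx \<epsilon> \<delta> (fst st j) (ppr_d_super E \<alpha> F i j)"
    if st: "(gfp_step V E \<alpha> S F rmax)\<^sup>*\<^sup>* (gfp_init E F i) st"
      and trm: "\<not> (\<exists>st'. gfp_step V E \<alpha> S F rmax st st')"
      and j: "j \<in> S" and tj: "dpagerank V E \<alpha> F j \<le> \<tau>" for st j
  proof -
    have I: "Inv V E \<alpha> S F i st" by (rule reach[OF st])
    have small: "snd st v \<le> real (deg E v) * rmax" if v: "v \<in> V" for v
    proof (rule ccontr)
      assume "\<not> ?thesis"
      then have "gfp_step V E \<alpha> S F rmax st ((\<lambda>j. if j \<in> S \<and> v \<in> F j
                     then fst st j + \<alpha> * snd st v / real (card (F j)) else fst st j),
               (\<lambda>w. snd st w + (if w \<in> outN E v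
                                 then (1 - \<alpha>) * snd st v / real (deg E v) else 0))(v := 0))"
        unfolding gfp_step_def using v `\<not> snd st v \<le> real (deg E v) * rmax` by (intro bexI[of _ v]) auto
      then show False using trm by blast
    qed
    define err where "err = (\<Sum>v\<in>V. snd st v * Qf E \<alpha> F j v)"
    have x: "ppr_d_super E \<alpha> F i j = fst st j + err" using I j unfolding Inv_def err_def by blast
    have Qn: "\<And>v. 0 \<le> Qf E \<alpha> F j v" by (rule Qf_nonneg[OF G a])
    have e0: "0 \<le> err" unfolding err_def using I Qn unfolding Inv_def by (auto intro!: sum_nonneg)
    have "err \<le> (\<Sum>v\<in>V. real (deg E v) * rmax * Qf E \<alpha> F j v)"
      unfolding err_def by (rule sum_mono) (use small Qn in \<open>auto intro: mult_right_mono\<close>)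
    also have "\<dots> = rmax * (\<Sum>v\<in>V. real (deg E v) * Qf E \<alpha> F j v)"
      by (simp add: sum_distrib_left mult_ac)
    also have "(\<Sum>v\<in>V. real (deg E v) * Qf E \<alpha> F j v) = real (card E) * dpagerank V E \<alpha> F j"
    proof -
      have "(\<Sum>v\<in>V. real (deg E v) * Qf E \<alpha> F j v)
          = (\<Sum>v\<in>V. (\<Sum>t\<in>F j. ppr_d E \<alpha> v t) / real (card (F j)))"
        unfolding Qf_def ppr_d_def by (rule sum.cong) (simp_all add: sum_distrib_left)
      also have "\<dots> = (\<Sum>v\<in>V. \<Sum>t\<in>F j. ppr_d E \<alpha> v t) / real (card (F j))"
        by (rule sum_divide_distrib[symmetric])
      also have "\<dots> = (\<Sum>t\<in>F j. \<Sum>v\<in>V. ppr_d E \<alpha> v t) / real (card (F j))"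
        by (simp only: sum.swap[of _ V])
      also have "\<dots> = real (card E) * dpagerank V E \<alpha> F j"
        unfolding dpagerank_def using mpos by simp
      finally show ?thesis .
    qed
    finally have "err \<le> rmax * (real (card E) * dpagerank V E \<alpha> F j)" .
    also have "\<dots> \<le> rmax * (real (card E) * \<tau>)"
      using tj rpos mpos by (intro mult_left_mono) auto
    also have "\<dots> = \<epsilon> * \<delta>" using assms(8) mpos assms(7) by simp
    finally have eb: "err \<le> \<epsilon> * \<delta>" .
    have ab: "\<bar>fst st j - ppr_d_super E \<alpha> F i j\<bar> = err" using x e0 by simp
    show ?thesis unfolding eps_delta_approx_def ab
      using eb assms(5) by (auto intro: order.trans[OF eb] mult_left_mono)
  qed
  show ?thesis using part1 part2 by blast
qed

end
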